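(* For every $J$-unitary $T$ on ${\cal K}$, $$V(T)^{-1}=V(T)^*=V(T^{-1})=J\,V(T^* )\,J.$$
   Context: ${\cal H}$ is a separable complex Hilbert space, ${\cal K}={\cal H}\oplus{\cal H}$, $J=\begin{pmatrix}{\bf 1}&0\\0&-{\bf 1}\end{pmatrix}$. A bounded invertible $T$ on ${\cal K}$ is $J$-unitary if $T^*JT=J$; then $T^*$ and $T^{-1}$ are $J$-unitary, and writing $T=\begin{pmatrix}a&b\\c&d\end{pmatrix}$ the blocks $a,d$ are invertible. Define the unitary $V(T)=\begin{pmatrix}(a^* )^{-1}&bd^{-1}\\-d^{-1}c&d^{-1}\end{pmatrix}$. *)

theory Defs
  imports "HOL-Analysis.Analysis"
begin

text \<open>Convention: the inner product is linear in the second argument.\<close>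

class chilbert_space = banach +
  fixes scaleC :: "complex \<Rightarrow> 'a \<Rightarrow> 'a"
  fixes cinner :: "'a \<Rightarrow> 'a \<Rightarrow> complex"
  assumes scaleC_add_right: "scaleC a (x + y) = scaleC a x + scaleC a y"
    and scaleC_add_left: "scaleC (a + b) x = scaleC a x + scaleC b x"
    and scaleC_scaleC: "scaleC a (scaleC b x) = scaleC (a * b) x"
    and scaleC_one: "scaleC 1 x = x"
    and scaleR_scaleC: "scaleR r x = scaleC (complex_of_real r) x"
    and cinner_commute: "cinner x y = cnj (cinner y x)"
    and cinner_add_right: "cinner x (y + z) = cinner x y + cinner x z"
    and cinner_scaleC_right: "cinner x (scaleC a y) = a * cinner x y"
    and cinner_self_norm: "cinner x x = complex_of_real ((norm x)\<^sup>2)"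

text \<open>The Hilbert direct sum \<open>H \<oplus> H\<close>, realised on the product type (its norm is
  already the Euclidean combination of the component norms).\<close>

instantiation prod :: (chilbert_space, chilbert_space) chilbert_space
begin

definition scaleC_prod_def: "scaleC c (p :: 'a \<times> 'b) = (scaleC c (fst p), scaleC c (snd p))"
definition cinner_prod_def: "cinner (p :: 'a \<times> 'b) q = cinner (fst p) (fst q) + cinner (snd p) (snd q)"

instance
proof
  fix a b :: complex and x y z :: "'a \<times> 'b" and r :: real
  show "scaleC a (x + y) = scaleC a x + scaleC a y"
    by (simp add: scaleC_prod_def scaleC_add_right)
  show "scaleC (a + b) x = scaleC a x + scaleC b x"
    by (simp add: scaleC_prod_def scaleC_add_left)
  show "scaleC a (scaleC b x) = scaleC (a * b) x"
    by (simp add: scaleC_prod_def scaleC_scaleC)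
  show "scaleC 1 x = x"
    by (simp add: scaleC_prod_def scaleC_one)
  show "scaleR r x = scaleC (complex_of_real r) x"
    by (simp add: scaleC_prod_def scaleR_scaleC scaleR_prod_def)
  show "cinner x y = cnj (cinner y x)"
    by (simp add: cinner_prod_def cinner_commute[of "fst x"] cinner_commute[of "snd x"])
  show "cinner x (y + z) = cinner x y + cinner x z"
    by (simp add: cinner_prod_def cinner_add_right)
  show "cinner x (scaleC a y) = a * cinner x y"
    by (simp add: cinner_prod_def scaleC_prod_def cinner_scaleC_right algebra_simps)
  show "cinner x x = complex_of_real ((norm x)\<^sup>2)"
    by (simp add: cinner_prod_def cinner_self_norm norm_prod_def)
qed

end

definition clinear :: "('a::chilbert_space \<Rightarrow> 'b::chilbert_space) \<Rightarrow> bool" where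
  "clinear f \<longleftrightarrow> (\<forall>x y. f (x + y) = f x + f y) \<and> (\<forall>c x. f (scaleC c x) = scaleC c (f x))"

definition bounded_clinear :: "('a::chilbert_space \<Rightarrow> 'b::chilbert_space) \<Rightarrow> bool" where
  "bounded_clinear f \<longleftrightarrow> clinear f \<and> (\<exists>K. \<forall>x. norm (f x) \<le> norm x * K)"

text \<open>Adjoint of an operator (exists and is unique for bounded operators on a Hilbert space).\<close>
definition adj :: "('a::chilbert_space \<Rightarrow> 'a) \<Rightarrow> ('a \<Rightarrow> 'a)" where
  "adj T = (SOME S. \<forall>x y. cinner (T x) y = cinner x (S y))"

definition bounded_invertible :: "('a::chilbert_space \<Rightarrow> 'a) \<Rightarrow> bool" where
  "bounded_invertible T \<longleftrightarrow> bounded_clinear T \<and> bij T \<and> bounded_clinear (inv T)"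

definition Jop :: "('a::chilbert_space \<times> 'a) \<Rightarrow> ('a \<times> 'a)" where
  "Jop p = (fst p, - snd p)"

definition J_unitary :: "(('a::chilbert_space \<times> 'a) \<Rightarrow> ('a \<times> 'a)) \<Rightarrow> bool" where
  "J_unitary T \<longleftrightarrow> bounded_invertible T \<and> adj T \<circ> Jop \<circ> T = Jop"

text \<open>Block entries of \<open>T = [[a, b], [c, d]]\<close>.\<close>
definition blk_a :: "(('a::chilbert_space \<times> 'a) \<Rightarrow> ('a \<times> 'a)) \<Rightarrow> 'a \<Rightarrow> 'a" where
  "blk_a T x = fst (T (x, 0))"
definition blk_b :: "(('a::chilbert_space \<times> 'a) \<Rightarrow> ('a \<times> 'a)) \<Rightarrow> 'a \<Rightarrow> 'a" where
  "blk_b T y = fst (T (0, y))"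
definition blk_c :: "(('a::chilbert_space \<times> 'a) \<Rightarrow> ('a \<times> 'a)) \<Rightarrow> 'a \<Rightarrow> 'a" where
  "blk_c T x = snd (T (x, 0))"
definition blk_d :: "(('a::chilbert_space \<times> 'a) \<Rightarrow> ('a \<times> 'a)) \<Rightarrow> 'a \<Rightarrow> 'a" where
  "blk_d T y = snd (T (0, y))"

definition block_op :: "('a::chilbert_space \<Rightarrow> 'a) \<Rightarrow> ('a \<Rightarrow> 'a) \<Rightarrow> ('a \<Rightarrow> 'a) \<Rightarrow> ('a \<Rightarrow> 'a)
    \<Rightarrow> ('a \<times> 'a) \<Rightarrow> ('a \<times> 'a)" where
  "block_op a b c d p = (a (fst p) + b (snd p), c (fst p) + d (snd p))"

definition Vop :: "(('a::chilbert_space \<times> 'a) \<Rightarrow> ('a \<times> 'a)) \<Rightarrow> ('a \<times> 'a) \<Rightarrow> ('a \<times> 'a)" where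
  "Vop T = block_op (inv (adj (blk_a T))) (blk_b T \<circ> inv (blk_d T))
                    (\<lambda>x. - inv (blk_d T) (blk_c T x)) (inv (blk_d T))"

end

theory Submission
  imports Defs
begin



lemma scaleC_zero_right[simp]: "scaleC c 0 = 0"
  using scaleC_add_right[of c 0 0] by simp
lemma scaleC_zero_left[simp]: "scaleC 0 x = 0"
  using scaleC_add_left[of 0 0 x] by simp
lemma scaleC_minus_right: "scaleC c (- x) = - scaleC c x"
proof -
  have "scaleC c x + scaleC c (-x) = 0" using scaleC_add_right[of c x "-x"] by simp
  from minus_unique[OF this] show ?thesis by (rule sym)
qed
lemma scaleC_minus_left: "scaleC (- c) x = - scaleC c x"
proof -
  have "scaleC c x + scaleC (-c) x = 0" using scaleC_add_left[of c "-c" x] by simp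
  from minus_unique[OF this] show ?thesis by (rule sym)
qed
lemma scaleC_diff_right: "scaleC c (x - y) = scaleC c x - scaleC c y"
  by (simp only: diff_conv_add_uminus scaleC_add_right scaleC_minus_right)

lemma cinner_zero_right[simp]: "cinner x 0 = 0"
  using cinner_add_right[of x 0 0] by simp
lemma cinner_minus_right: "cinner x (- y) = - cinner x y"
proof -
  have "cinner x y + cinner x (-y) = 0" using cinner_add_right[of x y "-y"] by simp
  from minus_unique[OF this] show ?thesis by (rule sym)
qed
lemma cinner_diff_right: "cinner x (y - z) = cinner x y - cinner x z"
  by (simp only: diff_conv_add_uminus cinner_add_right cinner_minus_right)
lemma cinner_add_left: "cinner (x + y) z = cinner x z + cinner y z"
  by (simp add: cinner_commute[of "x+y" z] cinner_commute[of x z] cinner_commute[of y z] cinner_add_right)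
lemma cinner_zero_left[simp]: "cinner 0 x = 0"
  by (simp add: cinner_commute[of 0 x])
lemma cinner_minus_left: "cinner (- x) y = - cinner x y"
  by (simp add: cinner_commute[of "-x" y] cinner_commute[of x y] cinner_minus_right)
lemma cinner_diff_left: "cinner (x - y) z = cinner x z - cinner y z"
  by (simp add: cinner_commute[of "x-y" z] cinner_commute[of x z] cinner_commute[of y z] cinner_diff_right)
lemma cinner_scaleC_left: "cinner (scaleC a x) y = cnj a * cinner x y"
  by (simp add: cinner_commute[of "scaleC a x" y] cinner_commute[of x y] cinner_scaleC_right)

lemma cinner_self_zero: "cinner x x = 0 \<longleftrightarrow> x = 0"
  by (simp add: cinner_self_norm)

lemma cinner_all_zero: "(\<And>x. cinner x y = 0) \<Longrightarrow> y = 0"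
  using cinner_self_zero by blast

lemma norm_scaleC: "norm (scaleC c x) = cmod c * norm x"
proof -
  have "complex_of_real ((norm (scaleC c x))\<^sup>2) = cinner (scaleC c x) (scaleC c x)"
    by (rule cinner_self_norm[symmetric])
  also have "\<dots> = cnj c * c * cinner x x"
    by (simp add: cinner_scaleC_left cinner_scaleC_right mult_ac)
  also have "\<dots> = complex_of_real ((cmod c)^2 * (norm x)\<^sup>2)"
    by (simp only: cinner_self_norm of_real_mult complex_norm_square) (simp add: mult_ac)
  finally have "(norm (scaleC c x))\<^sup>2 = ((cmod c) * norm x)^2"
    by (metis of_real_eq_iff power_mult_distrib)
  then show ?thesis by (simp add: power2_eq_iff_nonneg)
qed

lemma cinner_self_expand:
  "cinner (x + y) (x + y) = cinner x x + cinner x y + cinner y x + cinner y y"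
  by (simp add: cinner_add_left cinner_add_right)

lemma Cauchy_Schwarz: "cmod (cinner x y) \<le> norm x * norm y"
proof (cases "y = 0")
  case True then show ?thesis by simp
next
  case False
  define t where "t = cinner y x / complex_of_real ((norm y)^2)"
  define u where "u = x - scaleC t y"
  have ny: "norm y > 0" using False by simp
  have o1: "cinner y u = 0"
    using ny by (simp add: u_def cinner_diff_right cinner_scaleC_right t_def cinner_self_norm)
  have o2: "cinner u y = 0"
    by (metis cinner_commute o1 complex_cnj_zero)
  have xu: "x = u + scaleC t y" by (simp add: u_def)
  have "cinner x x = cinner (u + scaleC t y) (u + scaleC t y)" using xu by simp
  also have "\<dots> = cinner u u + (t * cnj t) * cinner y y"
    unfolding cinner_self_expand
    by (simp add: cinner_scaleC_left cinner_scaleC_right o1 o2 mult_ac)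
  also have "\<dots> = complex_of_real ((norm u)^2 + (cmod t)^2 * (norm y)^2)"
    by (simp only: cinner_self_norm complex_norm_square[symmetric] of_real_add of_real_mult)
  finally have e: "(norm x)^2 = (norm u)^2 + (cmod t)^2 * (norm y)^2"
    by (simp only: cinner_self_norm of_real_eq_iff)
  have ct: "cmod t = cmod (cinner y x) / (norm y)^2"
    by (simp add: t_def norm_divide norm_power)
  define r where "r = cmod (cinner y x)"
  have "(r / (norm y)^2)^2 * (norm y)^2 \<le> (norm x)^2" using e ct r_def by simp
  then have "r^2 / (norm y)^2 \<le> (norm x)^2" using ny by (simp add: power2_eq_square)
  then have "r^2 \<le> (norm x)^2 * (norm y)^2" using ny by (simp add: divide_le_eq)
  then have "r^2 \<le> (norm x * norm y)^2" by (simp add: power_mult_distrib)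
  then have "r \<le> norm x * norm y"
    using power2_le_imp_le by fastforce
  then show ?thesis by (metis r_def cinner_commute complex_mod_cnj)
qed



lemma parallelogram:
  fixes u v :: "'a::chilbert_space"
  shows "(norm (u - v))^2 = 2 * (norm u)^2 + 2 * (norm v)^2 - (norm (u + v))^2"
proof -
  have "complex_of_real ((norm (u - v))^2 + (norm (u + v))^2)
      = cinner (u - v) (u - v) + cinner (u + v) (u + v)"
    by (simp only: of_real_add cinner_self_norm)
  also have "\<dots> = 2 * cinner u u + 2 * cinner v v"
    by (simp add: cinner_diff_left cinner_diff_right cinner_add_left cinner_add_right)
  also have "\<dots> = complex_of_real (2 * (norm u)^2 + 2 * (norm v)^2)"
    by (simp add: cinner_self_norm)
  finally have "(norm (u - v))^2 + (norm (u + v))^2 = 2 * (norm u)^2 + 2 * (norm v)^2"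
    by (simp only: of_real_eq_iff)
  then show ?thesis by simp
qed

definition csubspace :: "'a::chilbert_space set \<Rightarrow> bool" where
  "csubspace N \<longleftrightarrow> 0 \<in> N \<and> (\<forall>a\<in>N. \<forall>b\<in>N. a + b \<in> N) \<and> (\<forall>c. \<forall>a\<in>N. scaleC c a \<in> N)"

lemma exists_min:
  fixes x0 :: "'a::chilbert_space"
  assumes sub: "csubspace N" and cl: "closed N"
  shows "\<exists>m\<in>N. \<forall>n\<in>N. norm (x0 - m) \<le> norm (x0 - n)"
proof -
  have N0: "0 \<in> N" and Nadd: "\<And>a b. a \<in> N \<Longrightarrow> b \<in> N \<Longrightarrow> a + b \<in> N"
    and Nsc: "\<And>c a. a \<in> N \<Longrightarrow> scaleC c a \<in> N"
    using sub by (auto simp: csubspace_def)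
  define D where "D = (\<lambda>a. norm (x0 - a)) ` N"
  define \<delta> where "\<delta> = Inf D"
  have Dne: "D \<noteq> {}" using N0 by (auto simp: D_def)
  have bdd: "bdd_below D" by (auto simp: D_def intro!: bdd_belowI[of _ 0])
  have low: "\<delta> \<le> norm (x0 - a)" if "a \<in> N" for a
    unfolding \<delta>_def using bdd that by (auto simp: D_def intro!: cInf_lower)
  have d0: "0 \<le> \<delta>"
    unfolding \<delta>_def using Dne by (auto simp: D_def intro!: cInf_greatest)
  have "\<exists>a\<in>N. (norm (x0 - a))^2 < \<delta>^2 + inverse (real (Suc k))" for k
  proof -
    have "\<delta> < sqrt (\<delta>^2 + inverse (real (Suc k)))"
      using d0 by (simp add: real_less_rsqrt)
    then obtain r where "r \<in> D" "r < sqrt (\<delta>^2 + inverse (real (Suc k)))"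
      using cInf_lessD[OF Dne] unfolding \<delta>_def by blast
    then obtain a where a: "a \<in> N" "norm (x0 - a) < sqrt (\<delta>^2 + inverse (real (Suc k)))"
      by (auto simp: D_def)
    then have "(norm (x0 - a))^2 < \<delta>^2 + inverse (real (Suc k))"
      by (metis norm_ge_zero real_sqrt_less_iff real_sqrt_pow2_iff real_sqrt_power)
    with a show ?thesis by blast
  qed
  then obtain f where fN: "\<And>k. f k \<in> N"
    and fl: "\<And>k. (norm (x0 - f k))^2 < \<delta>^2 + inverse (real (Suc k))"
    by metis
  have cd: "(norm (f k - f j))^2 \<le> 2 * inverse (real (Suc k)) + 2 * inverse (real (Suc j))" for k j
  proof -
    define u where "u = x0 - f j"
    define v where "v = x0 - f k"
    define mid where "mid = scaleR (1/2) (f k + f j)"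
    have midN: "mid \<in> N" unfolding mid_def scaleR_scaleC by (intro Nsc Nadd fN)
    have "u + v = scaleR 2 (x0 - mid)"
      by (simp add: u_def v_def mid_def algebra_simps scaleR_2)
    then have "norm (u + v) = 2 * norm (x0 - mid)" by simp
    then have "norm (u + v) \<ge> 2 * \<delta>" using low[OF midN] by simp
    then have "(norm (u + v))^2 \<ge> (2 * \<delta>)^2" using d0 power_mono[of "2*\<delta>" "norm (u+v)" 2] by linarith
    moreover have "(norm (f k - f j))^2 = 2 * (norm u)^2 + 2 * (norm v)^2 - (norm (u + v))^2"
      using parallelogram[of u v] by (simp add: u_def v_def)
    moreover have "(norm u)^2 < \<delta>^2 + inverse (real (Suc j))" using fl u_def by simp
    moreover have "(norm v)^2 < \<delta>^2 + inverse (real (Suc k))" using fl v_def by simp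
    ultimately show ?thesis by (simp add: power_mult_distrib)
  qed
  have "Cauchy f"
  proof (rule CauchyI)
    fix e :: real assume e: "0 < e"
    obtain M :: nat where M: "inverse (real (Suc M)) < e^2 / 4"
      using e by (metis reals_Archimedean zero_less_divide_iff zero_less_numeral zero_less_power)
    show "\<exists>M. \<forall>m\<ge>M. \<forall>n\<ge>M. norm (f m - f n) < e"
    proof (intro exI allI impI)
      fix m n assume mn: "M \<le> m" "M \<le> n"
      have "inverse (real (Suc m)) \<le> inverse (real (Suc M))"
        using mn by (simp add: le_imp_inverse_le)
      moreover have "inverse (real (Suc n)) \<le> inverse (real (Suc M))"
        using mn by (simp add: le_imp_inverse_le)
      ultimately have "(norm (f m - f n))^2 < e^2"
        using cd[of m n] M by linarith
      then show "norm (f m - f n) < e" using e power2_less_imp_less[of "norm (f m - f n)" e] by simp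
    qed
  qed
  then obtain m where fm: "f \<longlonglongrightarrow> m" using Cauchy_convergent_iff convergent_def by blast
  have mN: "m \<in> N" using cl fm fN closed_sequential_limits by blast
  have "(\<lambda>k. (norm (x0 - f k))^2) \<longlonglongrightarrow> (norm (x0 - m))^2"
    by (intro tendsto_intros fm)
  moreover have "(\<lambda>k. \<delta>^2 + inverse (real (Suc k))) \<longlonglongrightarrow> \<delta>^2 + 0"
    by (intro tendsto_intros LIMSEQ_inverse_real_of_nat)
  ultimately have "(norm (x0 - m))^2 \<le> \<delta>^2 + 0"
    by (rule LIMSEQ_le) (intro exI[of _ 0] allI impI less_imp_le fl)
  then have md: "norm (x0 - m) \<le> \<delta>" using d0 power2_le_imp_le[of "norm (x0-m)" \<delta>] by simp
  show ?thesis
  proof (intro bexI[OF _ mN] ballI)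
    fix n assume "n \<in> N"
    from low[OF this] md show "norm (x0 - m) \<le> norm (x0 - n)" by linarith
  qed
qed



lemma exists_perp:
  fixes x0 :: "'a::chilbert_space"
  assumes sub: "csubspace N" and cl: "closed N"
  shows "\<exists>m\<in>N. \<forall>n\<in>N. cinner n (x0 - m) = 0"
proof -
  obtain m where mN: "m \<in> N" and mmin: "\<And>n. n \<in> N \<Longrightarrow> norm (x0 - m) \<le> norm (x0 - n)"
    using exists_min[OF sub cl] by blast
  have Nadd: "\<And>a b. a \<in> N \<Longrightarrow> b \<in> N \<Longrightarrow> a + b \<in> N"
    and Nsc: "\<And>c a. a \<in> N \<Longrightarrow> scaleC c a \<in> N"
    using sub by (auto simp: csubspace_def)
  define z where "z = x0 - m"
  have "cinner n z = 0" if nN: "n \<in> N" for n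
  proof (cases "n = 0")
    case True then show ?thesis by simp
  next
    case False
    define \<alpha> where "\<alpha> = cinner n z"
    define s where "s = (norm n)^2"
    have s0: "s > 0" using False by (simp add: s_def)
    define t where "t = \<alpha> / complex_of_real s"
    have cs: "complex_of_real s \<noteq> 0" using s0 by simp
    have zn: "cinner z n = cnj \<alpha>" by (simp add: \<alpha>_def cinner_commute[of z n])
    have nn: "cinner n n = complex_of_real s" by (simp add: s_def cinner_self_norm)
    have "cinner (z - scaleC t n) (z - scaleC t n)
        = cinner z z - t * cinner z n - cnj t * cinner n z + cnj t * t * cinner n n"
      by (simp add: cinner_diff_left cinner_diff_right cinner_scaleC_left cinner_scaleC_right
          algebra_simps)
    also have "\<dots> = cinner z z - \<alpha> * cnj \<alpha> / complex_of_real s"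
      unfolding zn nn t_def \<alpha>_def[symmetric] using cs
      by (simp add: field_simps)
    also have "\<dots> = complex_of_real ((norm z)^2 - (cmod \<alpha>)^2 / s)"
      by (simp only: cinner_self_norm of_real_diff of_real_divide complex_norm_square)
    finally have e: "(norm (z - scaleC t n))^2 = (norm z)^2 - (cmod \<alpha>)^2 / s"
      by (simp only: cinner_self_norm of_real_eq_iff)
    have "m + scaleC t n \<in> N" using mN nN by (intro Nadd Nsc)
    from mmin[OF this] have "norm z \<le> norm (z - scaleC t n)"
      by (simp add: z_def algebra_simps)
    then have "(norm z)^2 \<le> (norm (z - scaleC t n))^2"
      by (simp add: power_mono)
    with e have "(cmod \<alpha>)^2 / s \<le> 0" by simp
    then have "(cmod \<alpha>)^2 \<le> 0" using s0 by (simp add: divide_le_0_iff)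
    then have "\<alpha> = 0" by simp
    then show ?thesis by (simp add: \<alpha>_def)
  qed
  then show ?thesis using mN unfolding z_def by blast
qed

lemma riesz:
  fixes f :: "'a::chilbert_space \<Rightarrow> complex"
  assumes fadd: "\<And>x y. f (x + y) = f x + f y"
    and fsc: "\<And>c x. f (scaleC c x) = c * f x"
    and fb: "\<And>x. cmod (f x) \<le> norm x * K"
  shows "\<exists>w. \<forall>x. f x = cinner w x"
proof (cases "\<forall>x. f x = 0")
  case True then show ?thesis by (intro exI[of _ 0]) simp
next
  case False
  then obtain x0 where fx0: "f x0 \<noteq> 0" by blast
  have bl: "bounded_linear f"
    by (rule bounded_linear_intro[where K=K])
      (auto simp: fadd scaleR_scaleC fsc fb scaleR_conv_of_real)
  have fdiff: "f (a - b) = f a - f b" for a b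
    using linear_diff[OF bounded_linear.linear[OF bl]] .
  have f0: "f 0 = 0" using fdiff[of 0 0] by simp
  define N where "N = {x. f x = 0}"
  have sub: "csubspace N" by (auto simp: csubspace_def N_def fadd fsc f0)
  have cl: "closed N" unfolding N_def
    by (rule closed_Collect_eq) (auto intro: linear_continuous_on bl)
  obtain m where mN: "m \<in> N" and perp: "\<And>n. n \<in> N \<Longrightarrow> cinner n (x0 - m) = 0"
    using exists_perp[OF sub cl] by blast
  define z where "z = x0 - m"
  have fz: "f z = f x0" using mN by (simp add: z_def fdiff N_def)
  have z0: "z \<noteq> 0" using fz fx0 f0 by auto
  define s where "s = (norm z)^2"
  have s0: "s > 0" using z0 by (simp add: s_def)
  have cs: "complex_of_real s \<noteq> 0" using s0 by simp
  define w where "w = scaleC (cnj (f z) / complex_of_real s) z"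
  have "f x = cinner w x" for x
  proof -
    have "scaleC (f z) x - scaleC (f x) z \<in> N"
      by (simp add: N_def fdiff fsc)
    from perp[OF this] have "cnj (f z) * cinner x z - cnj (f x) * cinner z z = 0"
      by (simp add: z_def[symmetric] cinner_diff_left cinner_scaleC_left)
    then have h: "cnj (f x) * complex_of_real s = cnj (f z) * cinner x z"
      by (simp add: cinner_self_norm s_def)
    have "cnj (cnj (f x) * complex_of_real s) = cnj (cnj (f z) * cinner x z)" using h by (rule arg_cong)
    then have "f x * complex_of_real s = f z * cinner z x" using cinner_commute[of z x] by simp
    then have "f x = f z * cinner z x / complex_of_real s"
      using cs by (simp add: field_simps)
    also have "\<dots> = cinner w x"
      by (simp add: w_def cinner_scaleC_left)
    finally show ?thesis .
  qed
  then show ?thesis by blast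
qed

lemma adj_unique:
  fixes A :: "'a::chilbert_space \<Rightarrow> 'a"
  assumes "\<And>x y. cinner (A x) y = cinner x (S y)"
  shows "adj A = S"
proof -
  have ex: "\<exists>S. \<forall>x y. cinner (A x) y = cinner x (S y)" using assms by blast
  have P: "\<forall>x y. cinner (A x) y = cinner x (adj A y)"
    unfolding adj_def by (rule someI_ex[OF ex])
  show ?thesis
  proof
    fix y
    have "\<And>x. cinner x (adj A y - S y) = 0"
      using P assms by (simp add: cinner_diff_right)
    then have "adj A y - S y = 0" by (rule cinner_all_zero)
    then show "adj A y = S y" by simp
  qed
qed

lemma clinear_add: "clinear f \<Longrightarrow> f (x + y) = f x + f y"
  by (simp add: clinear_def)
lemma clinear_scaleC: "clinear f \<Longrightarrow> f (scaleC c x) = scaleC c (f x)"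
  by (simp add: clinear_def)
lemma clinear_zero: "clinear f \<Longrightarrow> f 0 = 0"
  using clinear_scaleC[of f 0 0] by simp
lemma clinear_minus: "clinear f \<Longrightarrow> f (- x) = - f x"
proof -
  assume l: "clinear f"
  have "f x + f (- x) = 0" using clinear_add[OF l, of x "-x"] clinear_zero[OF l] by simp
  from minus_unique[OF this] show ?thesis by (rule sym)
qed
lemma clinear_diff: "clinear f \<Longrightarrow> f (x - y) = f x - f y"
  by (simp only: diff_conv_add_uminus clinear_add clinear_minus)

lemma adj_exists:
  fixes A :: "'a::chilbert_space \<Rightarrow> 'a"
  assumes "bounded_clinear A"
  shows "\<forall>x y. cinner (A x) y = cinner x (adj A y)"
proof -
  from assms obtain K where lin: "clinear A" and bd: "\<And>x. norm (A x) \<le> norm x * K"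
    by (auto simp: bounded_clinear_def)
  have "\<exists>w. \<forall>x. cinner y (A x) = cinner w x" for y
  proof (rule riesz[where K = "norm y * K"])
    show "cinner y (A (a + b)) = cinner y (A a) + cinner y (A b)" for a b
      by (simp add: clinear_add[OF lin] cinner_add_right)
    show "cinner y (A (scaleC c a)) = c * cinner y (A a)" for c a
      by (simp add: clinear_scaleC[OF lin] cinner_scaleC_right)
    show "cmod (cinner y (A a)) \<le> norm a * (norm y * K)" for a
    proof -
      have "cmod (cinner y (A a)) \<le> norm y * norm (A a)" by (rule Cauchy_Schwarz)
      also have "\<dots> \<le> norm y * (norm a * K)" by (simp add: bd mult_left_mono)
      finally show ?thesis by (simp add: mult_ac)
    qed
  qed
  then obtain S where S: "\<And>y x. cinner y (A x) = cinner (S y) x" by metis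
  have "\<And>x y. cinner (A x) y = cinner x (S y)"
  proof -
    fix x y
    have "cinner (A x) y = cnj (cinner y (A x))" by (rule cinner_commute)
    also have "\<dots> = cnj (cinner (S y) x)" by (simp only: S)
    also have "\<dots> = cinner x (S y)" by (rule cinner_commute[symmetric])
    finally show "cinner (A x) y = cinner x (S y)" .
  qed
  then have "adj A = S" by (rule adj_unique)
  then show ?thesis using \<open>\<And>x y. cinner (A x) y = cinner x (S y)\<close> by simp
qed



definition Jpres :: "(('a::chilbert_space \<times> 'a) \<Rightarrow> ('a \<times> 'a)) \<Rightarrow> bool" where
  "Jpres S \<longleftrightarrow> (\<forall>u v. cinner (S u) (Jop (S v)) = cinner u (Jop v))"

definition GOOD :: "(('a::chilbert_space \<times> 'a) \<Rightarrow> ('a \<times> 'a)) \<Rightarrow> bool" where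
  "GOOD S \<longleftrightarrow> bounded_clinear S \<and> bounded_clinear (inv S) \<and> bij S \<and> Jpres S"

lemma JpresD: "Jpres S \<Longrightarrow> cinner (S u) (Jop (S v)) = cinner u (Jop v)"
  unfolding Jpres_def by (erule allE)+

lemma cinner_J: "cinner p (Jop q) = cinner (fst p) (fst q) - cinner (snd p) (snd q)"
  by (simp add: cinner_prod_def Jop_def cinner_minus_right)

lemma S_x0: "S (x, 0) = (blk_a S x, blk_c S x)"
  by (simp add: blk_a_def blk_c_def)
lemma S_0y: "S (0, y) = (blk_b S y, blk_d S y)"
  by (simp add: blk_b_def blk_d_def)

lemma S_pair:
  assumes "clinear S"
  shows "S (x1, x2) = (blk_a S x1 + blk_b S x2, blk_c S x1 + blk_d S x2)"
proof -
  have "S (x1, x2) = S ((x1, 0) + (0, x2))" by simp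
  also have "\<dots> = S (x1, 0) + S (0, x2)" by (rule clinear_add[OF assms])
  finally show ?thesis by (simp add: S_x0 S_0y)
qed

lemma scaleC_pair: "scaleC c (x, y) = (scaleC c x, scaleC c y)"
  by (simp add: scaleC_prod_def)

lemma blk_clinear:
  assumes "clinear S"
  shows "clinear (blk_a S)" "clinear (blk_b S)" "clinear (blk_c S)" "clinear (blk_d S)"
proof -
  have e1: "S (x + y, 0) = S (x, 0) + S (y, 0)" "S (0, x + y) = S (0, x) + S (0, y)" for x y :: 'a
    using clinear_add[OF assms, of "(x,0)" "(y,0)"] clinear_add[OF assms, of "(0,x)" "(0,y)"] by simp_all
  have e2: "S (scaleC c x, 0) = scaleC c (S (x, 0))" "S (0, scaleC c x) = scaleC c (S (0, x))" for c :: complex and x :: 'a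
    using clinear_scaleC[OF assms, of c "(x,0)"] clinear_scaleC[OF assms, of c "(0,x)"]
    by (simp_all add: scaleC_pair)
  show "clinear (blk_a S)" "clinear (blk_b S)" "clinear (blk_c S)" "clinear (blk_d S)"
    unfolding clinear_def blk_a_def blk_b_def blk_c_def blk_d_def
    by (simp_all add: e1 e2 scaleC_prod_def)
qed

lemma blk_bounded:
  assumes "bounded_clinear S"
  shows "\<exists>K. \<forall>x. norm (blk_d S x) \<le> norm x * K"
proof -
  from assms obtain K where K: "\<And>p. norm (S p) \<le> norm p * K"
    by (auto simp: bounded_clinear_def)
  have "norm (blk_d S x) \<le> norm x * K" for x
  proof -
    have "norm (blk_d S x) \<le> norm (S (0, x))"
      using norm_snd_le[of "snd (S (0,x))" "fst (S (0,x))"] by (simp add: blk_d_def)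
    also have "\<dots> \<le> norm (0::'a, x) * K" by (rule K)
    also have "norm (0::'a, x) = norm x" by (simp add: norm_Pair)
    finally show ?thesis .
  qed
  then show ?thesis by blast
qed

lemma inv_clinear:
  assumes l: "clinear f" and b: "bij f"
  shows "inv f (x + y) = inv f x + inv f y" "inv f (- x) = - inv f x"
proof -
  have s: "\<And>z. f (inv f z) = z" using b by (simp add: bij_is_surj surj_f_inv_f)
  have i: "inj f" using b by (simp add: bij_is_inj)
  have "f (inv f x + inv f y) = x + y" by (simp add: clinear_add[OF l] s)
  then show "inv f (x + y) = inv f x + inv f y" by (rule inv_f_eq[OF i])
  have "f (- inv f x) = - x" by (simp add: clinear_minus[OF l] s)
  then show "inv f (- x) = - inv f x" by (rule inv_f_eq[OF i])
qed

lemma Jpres_inv: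
  assumes b: "bij S" and J: "Jpres S"
  shows "Jpres (inv S)"
  unfolding Jpres_def
proof (intro allI)
  fix u v
  have s: "\<And>z. S (inv S z) = z" using b by (simp add: bij_is_surj surj_f_inv_f)
  have "cinner (S (inv S u)) (Jop (S (inv S v))) = cinner (inv S u) (Jop (inv S v))"
    by (rule JpresD[OF J])
  then show "cinner (inv S u) (Jop (inv S v)) = cinner u (Jop v)" by (simp add: s)
qed

lemma GOOD_inv: "GOOD S \<Longrightarrow> GOOD (inv S)"
  unfolding GOOD_def by (auto simp: inv_inv_eq bij_imp_bij_inv Jpres_inv)

lemma d_below:
  assumes J: "Jpres S"
  shows "norm x \<le> norm (blk_d S x)"
proof -
  have "cinner (S (0, x)) (Jop (S (0, x))) = cinner (0, x) (Jop (0, x))"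
    by (rule JpresD[OF J])
  then have "cinner (blk_b S x) (blk_b S x) - cinner (blk_d S x) (blk_d S x) = - cinner x x"
    by (simp add: cinner_J S_0y[of S] Jop_def cinner_prod_def cinner_minus_right)
  then have "complex_of_real ((norm (blk_b S x))^2 - (norm (blk_d S x))^2) = complex_of_real (- ((norm x)^2))"
    by (simp add: cinner_self_norm)
  then have "(norm (blk_b S x))^2 - (norm (blk_d S x))^2 = - ((norm x)^2)"
    by (simp only: of_real_eq_iff)
  then have "(norm x)^2 \<le> (norm (blk_d S x))^2" using zero_le_power2[of "norm (blk_b S x)"] by linarith
  then show ?thesis using power2_le_imp_le[of "norm x" "norm (blk_d S x)"] by simp
qed

lemma d_adj:
  assumes b: "bij S" and J: "Jpres S"
  shows "cinner (blk_d S x) y = cinner x (blk_d (inv S) y)"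
proof -
  have s: "S (inv S (0, y)) = (0, y)" using b by (simp add: bij_is_surj surj_f_inv_f)
  have "cinner (S (0, x)) (Jop (S (inv S (0, y)))) = cinner (0, x) (Jop (inv S (0, y)))"
    by (rule JpresD[OF J])
  then show ?thesis by (simp add: cinner_J S_0y[of S] s blk_d_def[of "inv S"] Jop_def cinner_prod_def cinner_minus_right)
qed

lemma a_adj:
  assumes b: "bij S" and J: "Jpres S"
  shows "cinner (blk_a S x) y = cinner x (blk_a (inv S) y)"
proof -
  have s: "S (inv S (y, 0)) = (y, 0)" using b by (simp add: bij_is_surj surj_f_inv_f)
  have "cinner (S (x, 0)) (Jop (S (inv S (y, 0)))) = cinner (x, 0) (Jop (inv S (y, 0)))"
    by (rule JpresD[OF J])
  then show ?thesis by (simp add: cinner_J S_x0[of S] s blk_a_def[of "inv S"] Jop_def cinner_prod_def)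
qed



lemma GOOD_D:
  assumes "GOOD S"
  shows "clinear S" "clinear (inv S)" "bij S" "Jpres S" "Jpres (inv S)"
    "bounded_clinear S" "\<And>z. S (inv S z) = z" "\<And>z. inv S (S z) = z"
  using assms by (auto simp: GOOD_def bounded_clinear_def Jpres_inv bij_is_surj surj_f_inv_f
      bij_is_inj inv_f_f)

lemma d_surj:
  assumes G: "GOOD S"
  shows "surj (blk_d S)"
proof -
  note g = GOOD_D[OF G]
  define d where "d = blk_d S"
  have dl: "clinear d" using blk_clinear(4)[OF g(1)] by (simp add: d_def)
  obtain K where K: "\<And>x. norm (d x) \<le> norm x * K"
    using blk_bounded[OF g(6)] by (auto simp: d_def)
  have bl: "bounded_linear d"
    by (rule bounded_linear_intro[where K=K])
      (auto simp: clinear_add[OF dl] scaleR_scaleC clinear_scaleC[OF dl] K)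
  have below: "norm x \<le> norm (d x)" for x using d_below[OF g(4)] by (simp add: d_def)
  define R where "R = range d"
  have sub: "csubspace R"
    unfolding csubspace_def R_def
  proof (intro conjI ballI allI)
    show "0 \<in> range d" using clinear_zero[OF dl] by (metis rangeI)
    fix a b assume "a \<in> range d" "b \<in> range d"
    then obtain a' b' where "a = d a'" "b = d b'" by blast
    then have "a + b = d (a' + b')" by (simp add: clinear_add[OF dl])
    then show "a + b \<in> range d" by simp
  next
    fix c a assume "a \<in> range d"
    then obtain a' where "a = d a'" by blast
    then have "scaleC c a = d (scaleC c a')" by (simp add: clinear_scaleC[OF dl])
    then show "scaleC c a \<in> range d" by simp
  qed
  have cl: "closed R"
    unfolding closed_sequential_limits
  proof (intro allI impI)
    fix x l assume h: "(\<forall>n. x n \<in> R) \<and> x \<longlonglongrightarrow> l"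
    then have "\<forall>n. \<exists>a. x n = d a" by (auto simp: R_def)
    then obtain p where p: "\<And>n. x n = d (p n)" by metis
    have cx: "Cauchy x" using h LIMSEQ_imp_Cauchy by blast
    have "Cauchy p"
    proof (rule CauchyI)
      fix e :: real assume e: "0 < e"
      obtain M where M: "\<And>m n. M \<le> m \<Longrightarrow> M \<le> n \<Longrightarrow> norm (x m - x n) < e"
        using CauchyD[OF cx e] by blast
      have "norm (p m - p n) < e" if "M \<le> m" "M \<le> n" for m n
      proof -
        have "norm (p m - p n) \<le> norm (d (p m - p n))" by (rule below)
        also have "\<dots> = norm (x m - x n)" by (simp add: clinear_diff[OF dl] p)
        finally show ?thesis using M[OF that] by linarith
      qed
      then show "\<exists>M. \<forall>m\<ge>M. \<forall>n\<ge>M. norm (p m - p n) < e" by blast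
    qed
    then obtain q where pq: "p \<longlonglongrightarrow> q" using Cauchy_convergent_iff convergent_def by blast
    have "(\<lambda>n. d (p n)) \<longlonglongrightarrow> d q" by (rule bounded_linear.tendsto[OF bl pq])
    then have "x \<longlonglongrightarrow> d q" by (simp add: p[symmetric])
    then have "l = d q" using h LIMSEQ_unique by blast
    then show "l \<in> R" by (simp add: R_def)
  qed
  show ?thesis
  proof (rule ccontr)
    assume "\<not> surj (blk_d S)"
    then obtain y where y: "y \<notin> R" by (auto simp: R_def d_def)
    obtain m where mR: "m \<in> R" and perp: "\<And>n. n \<in> R \<Longrightarrow> cinner n (y - m) = 0"
      using exists_perp[OF sub cl] by blast
    define z where "z = y - m"
    have z0: "z \<noteq> 0" using y mR by (auto simp: z_def)
    have "cinner x (blk_d (inv S) z) = 0" for x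
    proof -
      have "cinner (d x) z = 0" using perp[of "d x"] by (simp add: R_def z_def)
      then show ?thesis using d_adj[OF g(3) g(4)] by (simp add: d_def)
    qed
    then have "blk_d (inv S) z = 0" by (rule cinner_all_zero)
    then have "norm z \<le> 0" using d_below[OF g(5), of z] by simp
    then show False using z0 by simp
  qed
qed

lemma d_bij:
  assumes G: "GOOD S"
  shows "bij (blk_d S)"
proof -
  note g = GOOD_D[OF G]
  have dl: "clinear (blk_d S)" using blk_clinear(4)[OF g(1)] .
  have "inj (blk_d S)"
  proof (rule injI)
    fix x y assume "blk_d S x = blk_d S y"
    then have "blk_d S (x - y) = 0" by (simp add: clinear_diff[OF dl])
    then have "norm (x - y) \<le> 0" using d_below[OF g(4), of "x - y"] by simp
    then show "x = y" by simp
  qed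
  then show ?thesis using d_surj[OF G] by (simp add: bij_def)
qed

lemma a'_inj:
  assumes G: "GOOD S"
  shows "inj (blk_a (inv S))"
proof -
  note g = GOOD_D[OF G]
  have al: "clinear (blk_a (inv S))" using blk_clinear(1)[OF g(2)] .
  have dl: "clinear (blk_d S)" using blk_clinear(4)[OF g(1)] .
  have di: "inj (blk_d S)" using d_bij[OF G] by (simp add: bij_is_inj)
  have ker: "y = 0" if "blk_a (inv S) y = 0" for y
  proof -
    define p where "p = inv S (y, 0)"
    have fp: "fst p = 0" using that by (simp add: p_def blk_a_def)
    have Sp: "S p = (y, 0)" by (simp add: p_def g(7))
    have pe: "p = (0, snd p)" using fp by (metis prod.collapse)
    have "S (0, snd p) = (y, 0)" using Sp pe by simp
    then have "blk_d S (snd p) = 0" and yb: "blk_b S (snd p) = y" by (simp_all add: S_0y[of S])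
    then have "blk_d S (snd p) = blk_d S 0" by (simp add: clinear_zero[OF dl])
    then have "snd p = 0" using di by (simp add: inj_eq)
    then have "p = 0" using pe by (simp add: zero_prod_def)
    then have "S p = 0" using clinear_zero[OF g(1)] by simp
    then show "y = 0" using Sp by (simp add: zero_prod_def)
  qed
  show ?thesis
  proof (rule injI)
    fix x y assume "blk_a (inv S) x = blk_a (inv S) y"
    then have "blk_a (inv S) (x - y) = 0" by (simp add: clinear_diff[OF al])
    then have "x - y = 0" by (rule ker)
    then show "x = y" by simp
  qed
qed

lemma a_leftinv:
  assumes G: "GOOD S"
  shows "blk_a (inv S) (blk_a S x - blk_b S (inv (blk_d S) (blk_c S x))) = x"
proof -
  note g = GOOD_D[OF G]
  have bl: "clinear (blk_b S)" using blk_clinear(2)[OF g(1)] .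
  have dl: "clinear (blk_d S)" using blk_clinear(4)[OF g(1)] .
  have db: "bij (blk_d S)" by (rule d_bij[OF G])
  have ds: "blk_d S (inv (blk_d S) z) = z" for z using db by (simp add: bij_is_surj surj_f_inv_f)
  define w where "w = inv (blk_d S) (blk_c S x)"
  define L where "L = blk_a S x - blk_b S w"
  have Sv: "S (x, - w) = (L, 0)"
    by (simp add: S_pair[OF g(1)] clinear_minus[OF bl] clinear_minus[OF dl] w_def ds L_def)
  have "cinner u (blk_a (inv S) L - x) = 0" for u
  proof -
    have "cinner (S (u, 0)) (Jop (S (x, - w))) = cinner (u, 0) (Jop (x, - w))"
      by (rule JpresD[OF g(4)])
    then have "cinner (blk_a S u) L = cinner u x"
      by (simp add: Sv S_x0[of S] cinner_J)
    then show ?thesis using a_adj[OF g(3) g(4)] by (simp add: cinner_diff_right)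
  qed
  then have "blk_a (inv S) L - x = 0" by (rule cinner_all_zero)
  then show ?thesis by (simp add: L_def w_def)
qed

lemma inv_adj_a:
  assumes G: "GOOD S"
  shows "inv (adj (blk_a S)) x = blk_a S x - blk_b S (inv (blk_d S) (blk_c S x))"
proof -
  note g = GOOD_D[OF G]
  have "adj (blk_a S) = blk_a (inv S)"
    by (rule adj_unique) (rule a_adj[OF g(3) g(4)])
  then show ?thesis using inv_f_eq[OF a'_inj[OF G] a_leftinv[OF G]] by simp
qed

lemma Vop_main:
  assumes G: "GOOD S"
  shows "Vop S (x1, snd (S (x1, x2))) = (fst (S (x1, x2)), x2)"
proof -
  note g = GOOD_D[OF G]
  have bl: "clinear (blk_b S)" using blk_clinear(2)[OF g(1)] .
  have dl: "clinear (blk_d S)" using blk_clinear(4)[OF g(1)] .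
  have db: "bij (blk_d S)" by (rule d_bij[OF G])
  have di: "inv (blk_d S) (blk_d S z) = z" for z using db by (simp add: bij_is_inj inv_f_f)
  have "inv (blk_d S) (blk_c S x1 + blk_d S x2) = inv (blk_d S) (blk_c S x1) + x2"
    by (simp add: inv_clinear(1)[OF dl db] di)
  then show ?thesis
    by (simp add: Vop_def block_op_def S_pair[OF g(1)] inv_adj_a[OF G] clinear_add[OF bl])
qed

lemma Vop_surj2:
  assumes G: "GOOD S"
  shows "\<exists>x2. snd (S (x1, x2)) = y2"
proof -
  note g = GOOD_D[OF G]
  have db: "bij (blk_d S)" by (rule d_bij[OF G])
  have ds: "blk_d S (inv (blk_d S) z) = z" for z using db by (simp add: bij_is_surj surj_f_inv_f)
  have "snd (S (x1, inv (blk_d S) (y2 - blk_c S x1))) = y2"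
    by (simp add: S_pair[OF g(1)] ds)
  then show ?thesis by blast
qed

lemma Vop_inv_comp:
  assumes G: "GOOD S"
  shows "Vop (inv S) (Vop S p) = p"
proof -
  note g = GOOD_D[OF G]
  obtain x1 y2 where p: "p = (x1, y2)" by (cases p)
  obtain x2 where x2: "snd (S (x1, x2)) = y2" using Vop_surj2[OF G] by blast
  define y1 where "y1 = fst (S (x1, x2))"
  have Sx: "S (x1, x2) = (y1, y2)" using x2 y1_def by (metis prod.collapse)
  have iS: "inv S (y1, y2) = (x1, x2)" using g(8)[of "(x1,x2)"] Sx by simp
  have "Vop S p = (y1, x2)" using Vop_main[OF G, of x1 x2] by (simp add: p x2 y1_def)
  moreover have "Vop (inv S) (y1, snd (inv S (y1, y2))) = (fst (inv S (y1, y2)), y2)"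
    by (rule Vop_main[OF GOOD_inv[OF G]])
  ultimately show ?thesis by (simp add: iS p)
qed

lemma Vop_isometry:
  assumes G: "GOOD S"
  shows "cinner (Vop S p) (Vop S q) = cinner p q"
proof -
  note g = GOOD_D[OF G]
  obtain x1 y2 where p: "p = (x1, y2)" by (cases p)
  obtain x2 where x2: "snd (S (x1, x2)) = y2" using Vop_surj2[OF G] by blast
  obtain x1' y2' where q: "q = (x1', y2')" by (cases q)
  obtain x2' where x2': "snd (S (x1', x2')) = y2'" using Vop_surj2[OF G] by blast
  have "cinner (S (x1, x2)) (Jop (S (x1', x2'))) = cinner (x1, x2) (Jop (x1', x2'))"
    by (rule JpresD[OF g(4)])
  then have e: "cinner (fst (S (x1, x2))) (fst (S (x1', x2'))) - cinner y2 y2'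
      = cinner x1 x1' - cinner x2 x2'"
    by (simp add: cinner_J x2 x2')
  have "Vop S p = (fst (S (x1, x2)), x2)" using Vop_main[OF G, of x1 x2] by (simp add: p x2)
  moreover have "Vop S q = (fst (S (x1', x2')), x2')" using Vop_main[OF G, of x1' x2'] by (simp add: q x2')
  ultimately show ?thesis using e by (simp add: p q cinner_prod_def algebra_simps)
qed



lemma Vop_conj:
  fixes S :: "('a::chilbert_space \<times> 'a) \<Rightarrow> ('a \<times> 'a)"
  assumes l: "clinear S" and db: "bij (blk_d S)"
  shows "Jop \<circ> Vop (Jop \<circ> S \<circ> Jop) \<circ> Jop = Vop S"
proof -
  have Sm: "S (0, - y) = - S (0, y)" for y :: 'a
    using clinear_minus[OF l, of "(0, y)"] by simp
  have ea: "blk_a (Jop \<circ> S \<circ> Jop) = blk_a S"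
    by (rule ext) (simp add: blk_a_def Jop_def)
  have eb: "blk_b (Jop \<circ> S \<circ> Jop) = (\<lambda>y. - blk_b S y)"
    by (rule ext) (simp add: blk_b_def Jop_def Sm)
  have ec: "blk_c (Jop \<circ> S \<circ> Jop) = (\<lambda>x. - blk_c S x)"
    by (rule ext) (simp add: blk_c_def Jop_def)
  have ed: "blk_d (Jop \<circ> S \<circ> Jop) = blk_d S"
    by (rule ext) (simp add: blk_d_def Jop_def Sm)
  have bl: "clinear (blk_b S)" using blk_clinear(2)[OF l] .
  have dl: "clinear (blk_d S)" using blk_clinear(4)[OF l] .
  show ?thesis
  proof
    fix p :: "'a \<times> 'a"
    show "(Jop \<circ> Vop (Jop \<circ> S \<circ> Jop) \<circ> Jop) p = Vop S p"
      unfolding Vop_def block_op_def ea eb ec ed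
      by (simp add: Jop_def inv_clinear[OF dl db] clinear_minus[OF bl])
  qed
qed

theorem proposition3p18:
  fixes T :: "('a::chilbert_space \<times> 'a) \<Rightarrow> ('a \<times> 'a)"
  assumes separable: "\<exists>D :: 'a set. countable D \<and> closure D = UNIV"
    and JU: "J_unitary T"
  shows "bij (Vop T) \<and> inv (Vop T) = adj (Vop T) \<and> adj (Vop T) = Vop (inv T)
         \<and> Vop (inv T) = Jop \<circ> Vop (adj T) \<circ> Jop"
proof -
  have bi: "bounded_invertible T" and eq: "adj T \<circ> Jop \<circ> T = Jop"
    using JU by (auto simp: J_unitary_def)
  have bT: "bounded_clinear T" and bijT: "bij T" and biT: "bounded_clinear (inv T)"
    using bi by (auto simp: bounded_invertible_def)
  have eqp: "adj T (Jop (T v)) = Jop v" for v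
    using fun_cong[OF eq, of v] by simp
  have "Jpres T"
    unfolding Jpres_def
  proof (intro allI)
    fix u v
    have "cinner (T u) (Jop (T v)) = cinner u (adj T (Jop (T v)))"
      using adj_exists[OF bT] by blast
    then show "cinner (T u) (Jop (T v)) = cinner u (Jop v)" by (simp add: eqp)
  qed
  then have G: "GOOD T" using bT bijT biT by (simp add: GOOD_def)
  have G': "GOOD (inv T)" by (rule GOOD_inv[OF G])
  have iiT: "inv (inv T) = T" using bijT by (simp add: inv_inv_eq)
  have c1: "Vop (inv T) (Vop T p) = p" for p by (rule Vop_inv_comp[OF G])
  have c2: "Vop T (Vop (inv T) p) = p" for p using Vop_inv_comp[OF G'] iiT by simp
  have bijV: "bij (Vop T)"
    by (rule o_bij[where g = "Vop (inv T)"]) (auto simp: c1 c2)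
  have invV: "inv (Vop T) = Vop (inv T)"
    by (rule inv_equality) (auto simp: c1 c2)
  have adjV: "adj (Vop T) = Vop (inv T)"
  proof (rule adj_unique)
    fix x y
    have "cinner (Vop T x) y = cinner (Vop T x) (Vop T (Vop (inv T) y))" by (simp add: c2)
    also have "\<dots> = cinner x (Vop (inv T) y)" by (rule Vop_isometry[OF G])
    finally show "cinner (Vop T x) y = cinner x (Vop (inv T) y)" .
  qed
  have JJ: "Jop (Jop q) = q" for q :: "'a \<times> 'a" by (simp add: Jop_def)
  have adjT: "adj T = Jop \<circ> inv T \<circ> Jop"
  proof
    fix q
    define r where "r = inv T (Jop q)"
    have "Jop (T r) = q" by (simp add: r_def GOOD_D(7)[OF G] JJ)
    then have "adj T q = Jop r" using eqp[of r] by simp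
    then show "adj T q = (Jop \<circ> inv T \<circ> Jop) q" by (simp add: r_def)
  qed
  have conj: "Jop \<circ> Vop (Jop \<circ> inv T \<circ> Jop) \<circ> Jop = Vop (inv T)"
    by (rule Vop_conj[OF GOOD_D(1)[OF G'] d_bij[OF G']])
  show ?thesis using bijV invV adjV conj adjT by simp
qed


end
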